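(* Let $\langle S_1\rangle$ be a good simplex and let $\langle S'\rangle$ be a codimension-one face of $\langle S_1\rangle$ which is not a face of $\Delta_0$. Then $\langle S'\rangle$ is a face of exactly one other good simplex $\langle S_2\rangle$, and $\langle S_1\rangle\cap\langle S_2\rangle=\langle S_1\cap S_2\rangle$.
   Context: Let $k\ge2$, $n=2k-1$, $e_1,\dots,e_k$ the standard basis of $\mathbb R^k$, $r_{(k)}=(r,\dots,r)\in\mathbb R^k$. In $\mathbb R^{2k}$ set $A_j=(e_j,0_{(k)})$, $B_j=\frac1{2n}(2_{(k)}-e_j,2_{(k)}-e_j)$, $C_j=(0_{(k)},e_j)$ for $j=1,\dots,k$; $A,B,C$ the corresponding $k$-element sets and $X=A\cup B\cup C$. $\langle\cdot\rangle$ denotes convex hull. $\Delta_0=\langle A\cup C\rangle$ is the standard simplex. A $2k$-element subset $S\subset X$ is good if it contains no set $\{A_j,B_j,C_j\}$ and $S\ne A\cup C$; a good simplex is $\langle S\rangle$ for a good set $S$ (these are $n$-simplices since good sets are bases of $\mathbb R^{2k}$). *)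

theory Defs
  imports "HOL-Analysis.Analysis"
begin

text \<open>Points of R^(2k) are modelled as pairs in (R^k) x (R^k); the index type 'k has
  CARD('k) = k elements. n = 2k - 1.\<close>

type_synonym 'k pt = "(real^'k) \<times> (real^'k)"

definition Apt :: "'k::finite \<Rightarrow> 'k pt" where
  "Apt j = (axis j 1, 0)"

definition Bpt :: "'k::finite \<Rightarrow> 'k pt" where
  "Bpt j = (1 / (2 * (2 * real CARD('k) - 1))) *\<^sub>R
            ((\<chi> i. 2) - axis j 1, (\<chi> i. 2) - axis j 1)"

definition Cpt :: "'k::finite \<Rightarrow> 'k pt" where
  "Cpt j = (0, axis j 1)"

definition Xset :: "'k::finite pt set" where
  "Xset = range Apt \<union> range Bpt \<union> range Cpt"

definition Delta0 :: "'k::finite pt set" where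
  "Delta0 = convex hull (range Apt \<union> range Cpt)"

definition good :: "'k::finite pt set \<Rightarrow> bool" where
  "good S \<longleftrightarrow> S \<subseteq> Xset \<and> card S = 2 * CARD('k)
     \<and> (\<forall>j. \<not> {Apt j, Bpt j, Cpt j} \<subseteq> S)
     \<and> S \<noteq> range Apt \<union> range Cpt"

end

theory Submission
  imports Defs
begin

lemma card_ge1: "real CARD('k::finite) \<ge> 1"
proof -
  have "CARD('k) > 0" by simp
  then show ?thesis by linarith
qed

definition ccj :: "'k::finite \<Rightarrow> real" where
  "ccj j = 1 / (2 * (2 * real CARD('k) - 1))"

lemma cc_pos_gen: "(x::real) \<ge> 1 \<Longrightarrow> 1 / (2 * (2 * x - 1)) > 0"
  by simp

lemma cc_pos: "ccj j > 0"
  unfolding ccj_def by (rule cc_pos_gen[OF card_ge1])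

lemma ccj_eq: fixes j j' :: "'k::finite" shows "ccj j = ccj j'"
  by (simp add: ccj_def)

lemma Bpt_alt: "Bpt (j::'k::finite) = (ccj j *\<^sub>R ((\<chi> i. 2) - axis j 1), ccj j *\<^sub>R ((\<chi> i. 2) - axis j 1))"
  by (simp add: Bpt_def ccj_def)

lemma Apt_comp: "fst (Apt j) $ i = (if i = j then 1 else 0)" "snd (Apt j) = 0"
  by (auto simp: Apt_def axis_def)
lemma Cpt_comp: "snd (Cpt j) $ i = (if i = j then 1 else 0)" "fst (Cpt j) = 0"
  by (auto simp: Cpt_def axis_def)
lemma Bpt_comp: "fst (Bpt (j::'k::finite)) $ i = ccj j * (2 - (if i = j then 1 else 0))"
   "snd (Bpt (j::'k::finite)) $ i = ccj j * (2 - (if i = j then 1 else 0))"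
  by (auto simp: Bpt_alt axis_def)

lemma Bpt_pos: "fst (Bpt (j::'k::finite)) $ i > 0" "snd (Bpt (j::'k::finite)) $ i > 0"
  using cc_pos[of j] ccj_eq[of j' j] by (auto simp: Bpt_comp)

lemma distinct_pts [simp]:
  "Apt j \<noteq> Bpt j'" "Bpt j' \<noteq> Apt j" "Apt j \<noteq> Cpt j'" "Cpt j' \<noteq> Apt j"
  "Bpt j \<noteq> Cpt j'" "Cpt j' \<noteq> Bpt j"
proof -
  show "Apt j \<noteq> Bpt j'" "Bpt j' \<noteq> Apt j"
    using Bpt_pos(2)[of j' j] by (metis Apt_comp(2) zero_index less_irrefl)+
  show "Bpt j \<noteq> Cpt j'" "Cpt j' \<noteq> Bpt j"
    using Bpt_pos(1)[of j j'] by (metis Cpt_comp(2) zero_index less_irrefl)+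
  show "Apt j \<noteq> Cpt j'" "Cpt j' \<noteq> Apt j"
    using Apt_comp(1)[of j j] by (metis Cpt_comp(2) zero_index zero_neq_one)+
qed

lemma inj_pts [simp]: "Apt (j::'k::finite) = Apt j' \<longleftrightarrow> j = j'" "Bpt (j::'k::finite) = Bpt j' \<longleftrightarrow> j = j'" "Cpt (j::'k::finite) = Cpt j' \<longleftrightarrow> j = j'"
proof -
  show "Apt j = Apt j' \<longleftrightarrow> j = j'"
    by (metis Apt_comp(1) zero_neq_one)
  show "Cpt j = Cpt j' \<longleftrightarrow> j = j'"
    by (metis Cpt_comp(1) zero_neq_one)
  show "Bpt j = Bpt j' \<longleftrightarrow> j = j'"
  proof
    assume h: "Bpt j = Bpt j'"
    show "j = j'"
    proof (rule ccontr)
      assume "j \<noteq> j'"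
      then have "fst (Bpt j) $ j \<noteq> fst (Bpt j') $ j"
        using cc_pos[of j] ccj_eq[of j' j] by (auto simp: Bpt_comp)
      then show False using h by auto
    qed
  qed simp
qed

lemma inj_Apt: "inj Apt" and inj_Bpt: "inj Bpt" and inj_Cpt: "inj Cpt"
  by (auto intro: injI)

lemma finite_Xset: "finite (Xset :: 'k::finite pt set)"
  by (simp add: Xset_def)

lemma disj_ranges: "range Apt \<inter> range Bpt = {}" "(range Apt \<union> range Bpt) \<inter> range Cpt = {}"
  by auto

lemma sum_X:
  fixes S :: "'k::finite pt set"
  assumes "S \<subseteq> Xset"
  shows "(\<Sum>v\<in>S. u v *\<^sub>R v) = (\<Sum>j\<in>UNIV. (if Apt j \<in> S then u (Apt j) else 0) *\<^sub>R Apt j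
      + (if Bpt j \<in> S then u (Bpt j) else 0) *\<^sub>R Bpt j + (if Cpt j \<in> S then u (Cpt j) else 0) *\<^sub>R Cpt j)"
proof -
  define U where "U v = (if v \<in> S then u v else 0)" for v
  have "(\<Sum>v\<in>S. u v *\<^sub>R v) = (\<Sum>v\<in>Xset. U v *\<^sub>R v)"
    by (rule sum.mono_neutral_cong_left) (use assms finite_Xset in \<open>auto simp: U_def\<close>)
  also have "\<dots> = (\<Sum>v\<in>range Apt. U v *\<^sub>R v) + (\<Sum>v\<in>range Bpt. U v *\<^sub>R v) + (\<Sum>v\<in>range Cpt. U v *\<^sub>R v)"
    unfolding Xset_def
    by (subst sum.union_disjoint, simp, simp, rule disj_ranges, subst sum.union_disjoint, simp, simp, rule disj_ranges, rule refl)
  also have "\<dots> = (\<Sum>j\<in>UNIV. U (Apt j) *\<^sub>R Apt j) + (\<Sum>j\<in>UNIV. U (Bpt j) *\<^sub>R Bpt j) + (\<Sum>j\<in>UNIV. U (Cpt j) *\<^sub>R Cpt j)"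
    by (simp add: sum.reindex inj_Apt inj_Bpt inj_Cpt)
  also have "\<dots> = (\<Sum>j\<in>UNIV. U (Apt j) *\<^sub>R Apt j + U (Bpt j) *\<^sub>R Bpt j + U (Cpt j) *\<^sub>R Cpt j)"
    by (simp add: sum.distrib)
  finally show ?thesis by (simp add: U_def)
qed

lemma fst_comb:
  fixes a b g :: "'k::finite \<Rightarrow> real"
  shows "fst (\<Sum>j\<in>UNIV. a j *\<^sub>R Apt j + b j *\<^sub>R Bpt j + g j *\<^sub>R Cpt j) $ i
     = a i + ccj i * (2 * sum b UNIV - b i)"
proof -
  have "fst (\<Sum>j\<in>UNIV. a j *\<^sub>R Apt j + b j *\<^sub>R Bpt j + g j *\<^sub>R Cpt j) $ i
      = (\<Sum>j\<in>UNIV. (if i = j then a j else 0) + (2 * ccj i * b j - (if i = j then ccj i * b j else 0)))"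
    unfolding fst_sum sum_component by (rule sum.cong) (auto simp: Apt_comp Cpt_comp Bpt_comp ccj_def algebra_simps)
  also have "\<dots> = a i + ccj i * (2 * sum b UNIV - b i)"
  proof -
    have h: "(\<Sum>j\<in>UNIV. 2 * ccj i * b j) = 2 * ccj i * sum b UNIV" by (rule sum_distrib_left[symmetric])
    show ?thesis by (simp only: sum.distrib sum_subtractf h sum.delta finite UNIV_I if_True) (simp add: algebra_simps)
  qed
  finally show ?thesis .
qed

lemma snd_comb:
  fixes a b g :: "'k::finite \<Rightarrow> real"
  shows "snd (\<Sum>j\<in>UNIV. a j *\<^sub>R Apt j + b j *\<^sub>R Bpt j + g j *\<^sub>R Cpt j) $ i
     = g i + ccj i * (2 * sum b UNIV - b i)"
proof -
  have "snd (\<Sum>j\<in>UNIV. a j *\<^sub>R Apt j + b j *\<^sub>R Bpt j + g j *\<^sub>R Cpt j) $ i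
      = (\<Sum>j\<in>UNIV. (if i = j then g j else 0) + (2 * ccj i * b j - (if i = j then ccj i * b j else 0)))"
    unfolding snd_sum sum_component by (rule sum.cong) (auto simp: Apt_comp Cpt_comp Bpt_comp ccj_def algebra_simps)
  also have "\<dots> = g i + ccj i * (2 * sum b UNIV - b i)"
  proof -
    have h: "(\<Sum>j\<in>UNIV. 2 * ccj i * b j) = 2 * ccj i * sum b UNIV" by (rule sum_distrib_left[symmetric])
    show ?thesis by (simp only: sum.distrib sum_subtractf h sum.delta finite UNIV_I if_True) (simp add: algebra_simps)
  qed
  finally show ?thesis .
qed

lemma two_parity0:
  fixes b :: "'k::finite \<Rightarrow> real"
  assumes h: "\<And>j. b j = 0 \<or> b j = 2 * B" and s: "sum b UNIV = B"
  shows "B = 0"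
proof (rule ccontr)
  assume nz: "B \<noteq> 0"
  have "B = sum b UNIV" using s by simp
  also have "\<dots> = (\<Sum>j\<in>UNIV. if b j = 2 * B then 2 * B else 0)"
    by (rule sum.cong) (use h in auto)
  also have "\<dots> = (\<Sum>j\<in>{j. b j = 2 * B}. 2 * B)"
    by (rule sum.mono_neutral_cong_right) auto
  also have "\<dots> = 2 * B * real (card {j. b j = 2 * B})"
    by simp
  finally have "B * 1 = B * (2 * real (card {j. b j = 2 * B}))" by (simp add: algebra_simps)
  then have "1 = 2 * real (card {j. b j = 2 * B})" using nz
    by (simp only: mult_cancel_left) simp
  then have "1 = 2 * card {j. b j = 2 * B}" by linarith
  then show False by presburger
qed

lemma two_parity:
  fixes b :: "'k::finite \<Rightarrow> real"
  assumes "\<And>j. b j = 0 \<or> b j = 2 * sum b UNIV"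
  shows "sum b UNIV = 0"
  by (rule two_parity0[OF assms refl])

lemma indep_X:
  fixes S :: "'k::finite pt set"
  assumes SX: "S \<subseteq> Xset" and tr: "\<forall>j. \<not> {Apt j, Bpt j, Cpt j} \<subseteq> S"
  shows "\<not> affine_dependent S"
proof
  have fin: "finite S" using SX finite_Xset finite_subset by blast
  assume "affine_dependent S"
  then obtain u where u0: "(\<Sum>v\<in>S. u v *\<^sub>R v) = 0" and nz: "\<exists>v\<in>S. u v \<noteq> 0"
    using affine_dependent_explicit_finite[OF fin] by blast
  define a where "a j = (if Apt j \<in> S then u (Apt j) else 0)" for j
  define b where "b j = (if Bpt j \<in> S then u (Bpt j) else 0)" for j
  define g where "g j = (if Cpt j \<in> S then u (Cpt j) else 0)" for j
  have E: "(\<Sum>j\<in>UNIV. a j *\<^sub>R Apt j + b j *\<^sub>R Bpt j + g j *\<^sub>R Cpt j) = 0"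
    using u0 sum_X[OF SX, of u] unfolding a_def b_def g_def by simp
  have ea: "a i + ccj i * (2 * sum b UNIV - b i) = 0" for i
    using fst_comb[of a b g i] E by simp
  have eg: "g i + ccj i * (2 * sum b UNIV - b i) = 0" for i
    using snd_comb[of a b g i] E by simp
  have bb: "b j = 0 \<or> b j = 2 * sum b UNIV" for j
  proof (cases "Bpt j \<in> S")
    case False then show ?thesis by (simp add: b_def)
  next
    case True
    then have "Apt j \<notin> S \<or> Cpt j \<notin> S" using tr by auto
    then have "a j = 0 \<or> g j = 0" by (auto simp: a_def g_def)
    then have "ccj j * (2 * sum b UNIV - b j) = 0" using ea[of j] eg[of j] by auto
    then show ?thesis using cc_pos[of j] by simp
  qed
  then have s0: "sum b UNIV = 0" by (rule two_parity)
  have b0: "b j = 0" for j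
    using bb[of j] s0 by auto
  have a0: "a j = 0" and g0: "g j = 0" for j using ea[of j] eg[of j] s0 b0[of j] by auto
  from nz obtain v where v: "v \<in> S" "u v \<noteq> 0" by blast
  then have "v \<in> Xset" using SX by auto
  then obtain j where "v = Apt j \<or> v = Bpt j \<or> v = Cpt j" unfolding Xset_def by auto
  then show False using v a0[of j] b0[of j] g0[of j] unfolding a_def b_def g_def by auto
qed

definition TP :: "'k::finite pt set \<Rightarrow> bool" where
  "TP S \<longleftrightarrow> (\<forall>j. (Apt j \<notin> S \<and> Bpt j \<in> S \<and> Cpt j \<in> S) \<or> (Apt j \<in> S \<and> Bpt j \<notin> S \<and> Cpt j \<in> S)
     \<or> (Apt j \<in> S \<and> Bpt j \<in> S \<and> Cpt j \<notin> S))"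

lemma ipA: "inner (\<alpha>, \<gamma>) (Apt j) = \<alpha> $ j"
  by (simp add: Apt_def inner_axis)
lemma ipC: "inner (\<alpha>, \<gamma>) (Cpt j) = \<gamma> $ j"
  by (simp add: Cpt_def inner_axis)
lemma ipB: "inner (\<alpha>, \<gamma>) (Bpt (j::'k::finite)) = ccj j * (2 * ((\<Sum>i\<in>UNIV. \<alpha> $ i) + (\<Sum>i\<in>UNIV. \<gamma> $ i)) - \<alpha> $ j - \<gamma> $ j)"
proof -
  have "inner \<alpha> (\<chi> i. 2) = 2 * (\<Sum>i\<in>UNIV. \<alpha> $ i)" for \<alpha> :: "real^'k"
    by (simp add: inner_vec_def sum_distrib_left mult.commute)
  then show ?thesis
    by (simp add: Bpt_alt inner_diff_right inner_axis algebra_simps)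
qed

lemma W_B:
  fixes j0 :: "'k::finite"
  shows "\<exists>w. (\<forall>s\<in>S1. s \<in> Xset \<longrightarrow> s \<noteq> Apt j0 \<and> s \<noteq> Cpt j0 \<longrightarrow> inner w s = 0)
     \<and> inner w (Apt j0) * inner w (Cpt j0) < 0"
proof (intro exI conjI ballI impI)
  let ?w = "(axis j0 1 :: real^'k, - axis j0 1 :: real^'k)"
  have s0: "(\<Sum>i\<in>UNIV. (axis j0 1 :: real^'k) $ i) + (\<Sum>i\<in>UNIV. (- axis j0 1 :: real^'k) $ i) = 0"
    by (simp add: sum_negf)
  fix s assume "s \<in> S1" "s \<in> Xset" and ne: "s \<noteq> Apt j0 \<and> s \<noteq> Cpt j0"
  then obtain j where "s = Apt j \<or> s = Bpt j \<or> s = Cpt j" unfolding Xset_def by auto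
  then show "inner ?w s = 0"
  proof (elim disjE)
    assume "s = Bpt j" then show ?thesis
      by (simp only: ipB s0) (simp add: axis_def)
  qed (use ne in \<open>auto simp: ipA ipC axis_def\<close>)
next
  show "inner (axis j0 1 :: real^'k, - axis j0 1 :: real^'k) (Apt j0) * inner (axis j0 1 :: real^'k, - axis j0 1 :: real^'k) (Cpt j0) < 0"
    by (simp add: ipA ipC)
qed

lemma W_A:
  fixes j0 :: "'k::finite" and S1 :: "'k pt set"
  assumes tp: "TP S1" and r: "Apt j0 \<in> S1" and jb: "j1 \<noteq> j0" "Bpt j1 \<in> S1"
  shows "\<exists>w. (\<forall>s\<in>S1. s \<in> Xset \<longrightarrow> s \<noteq> Bpt j0 \<and> s \<noteq> Cpt j0 \<longrightarrow> inner w s = 0)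
     \<and> inner w (Bpt j0) * inner w (Cpt j0) < 0"
proof -
  define f where "f j = (if j \<noteq> j0 \<and> Apt j \<notin> S1 then 2 else 0 :: real)" for j
  define g where "g j = (if j \<noteq> j0 \<and> Cpt j \<notin> S1 then 2 else 0 :: real)" for j
  define M where "M = sum f UNIV + sum g UNIV"
  define \<alpha> where "\<alpha> = (\<chi> j. f j)"
  define \<gamma> where "\<gamma> = (\<chi> j. g j) + (1 - M) *\<^sub>R axis j0 1"
  have sa: "(\<Sum>i\<in>UNIV. \<alpha> $ i) = sum f UNIV" by (simp add: \<alpha>_def)
  have sg: "(\<Sum>i\<in>UNIV. \<gamma> $ i) = sum g UNIV + (1 - M)"
  proof -
    have "(\<Sum>i\<in>UNIV. (1 - M) * (if i = j0 then 1 else 0)) = (1 - M) * (\<Sum>i\<in>UNIV. (if i = j0 then 1 else 0))"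
      by (rule sum_distrib_left[symmetric])
    then show ?thesis by (simp add: \<gamma>_def sum.distrib axis_def)
  qed
  have tot: "(\<Sum>i\<in>UNIV. \<alpha> $ i) + (\<Sum>i\<in>UNIV. \<gamma> $ i) = 1"
    using sa sg by (simp add: M_def)
  have f0: "f j0 = 0" and g0: "g j0 = 0" by (auto simp: f_def g_def)
  have fg2: "f j + g j = 2" if "j \<noteq> j0" "Bpt j \<in> S1" for j
  proof -
    have "(Apt j \<notin> S1 \<and> Cpt j \<in> S1) \<or> (Apt j \<in> S1 \<and> Cpt j \<notin> S1)"
      using tp that unfolding TP_def by blast
    then show ?thesis using that(1) by (auto simp: f_def g_def)
  qed
  have fnn: "f j \<ge> 0" "g j \<ge> 0" for j by (auto simp: f_def g_def)
  have "f j1 \<le> sum f UNIV" "g j1 \<le> sum g UNIV"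
    by (rule member_le_sum; simp add: fnn)+
  then have M2: "M \<ge> 2" using fg2[OF jb] by (simp add: M_def)
  show ?thesis
  proof (intro exI conjI ballI impI)
    fix s assume "s \<in> S1" "s \<in> Xset" and ne: "s \<noteq> Bpt j0 \<and> s \<noteq> Cpt j0"
    then obtain j where sj: "s = Apt j \<or> s = Bpt j \<or> s = Cpt j" unfolding Xset_def by auto
    then show "inner (\<alpha>, \<gamma>) s = 0"
    proof (elim disjE)
      assume s: "s = Bpt j"
      then have "j \<noteq> j0" using ne by auto
      moreover have "\<gamma> $ j = g j" using \<open>j \<noteq> j0\<close> by (simp add: \<gamma>_def axis_def)
      ultimately show ?thesis using s \<open>s \<in> S1\<close> fg2[of j]
        by (simp only: ipB tot) (simp add: \<alpha>_def)
    next
      assume s: "s = Apt j"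
      then show ?thesis using \<open>s \<in> S1\<close> by (simp add: ipA \<alpha>_def f_def)
    next
      assume s: "s = Cpt j"
      then have "j \<noteq> j0" using ne by auto
      then show ?thesis using s \<open>s \<in> S1\<close> by (simp add: ipC \<gamma>_def g_def axis_def)
    qed
  next
    have "inner (\<alpha>, \<gamma>) (Bpt j0) = ccj j0 * (1 + M)"
      by (simp only: ipB tot) (simp add: \<alpha>_def \<gamma>_def f0 g0)
    moreover have "inner (\<alpha>, \<gamma>) (Cpt j0) = 1 - M"
      by (simp add: ipC \<gamma>_def g0)
    moreover have "ccj j0 * (1 + M) > 0" using cc_pos[of j0] M2 by simp
    ultimately show "inner (\<alpha>, \<gamma>) (Bpt j0) * inner (\<alpha>, \<gamma>) (Cpt j0) < 0"
      using M2 by (simp add: mult_pos_neg)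
  qed
qed

lemma W_C:
  fixes j0 :: "'k::finite" and S1 :: "'k pt set"
  assumes tp: "TP S1" and r: "Cpt j0 \<in> S1" and jb: "j1 \<noteq> j0" "Bpt j1 \<in> S1"
  shows "\<exists>w. (\<forall>s\<in>S1. s \<in> Xset \<longrightarrow> s \<noteq> Apt j0 \<and> s \<noteq> Bpt j0 \<longrightarrow> inner w s = 0)
     \<and> inner w (Apt j0) * inner w (Bpt j0) < 0"
proof -
  define f where "f j = (if j \<noteq> j0 \<and> Apt j \<notin> S1 then 2 else 0 :: real)" for j
  define g where "g j = (if j \<noteq> j0 \<and> Cpt j \<notin> S1 then 2 else 0 :: real)" for j
  define M where "M = sum f UNIV + sum g UNIV"
  define \<gamma> where "\<gamma> = (\<chi> j. g j)"
  define \<alpha> where "\<alpha> = (\<chi> j. f j) + (1 - M) *\<^sub>R axis j0 1"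
  have sa: "(\<Sum>i\<in>UNIV. \<gamma> $ i) = sum g UNIV" by (simp add: \<gamma>_def)
  have sg: "(\<Sum>i\<in>UNIV. \<alpha> $ i) = sum f UNIV + (1 - M)"
  proof -
    have "(\<Sum>i\<in>UNIV. (1 - M) * (if i = j0 then 1 else 0)) = (1 - M) * (\<Sum>i\<in>UNIV. (if i = j0 then 1 else 0))"
      by (rule sum_distrib_left[symmetric])
    then show ?thesis by (simp add: \<alpha>_def sum.distrib axis_def)
  qed
  have tot: "(\<Sum>i\<in>UNIV. \<alpha> $ i) + (\<Sum>i\<in>UNIV. \<gamma> $ i) = 1"
    using sa sg by (simp add: M_def)
  have f0: "f j0 = 0" and g0: "g j0 = 0" by (auto simp: f_def g_def)
  have fg2: "f j + g j = 2" if "j \<noteq> j0" "Bpt j \<in> S1" for j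
  proof -
    have "(Apt j \<notin> S1 \<and> Cpt j \<in> S1) \<or> (Apt j \<in> S1 \<and> Cpt j \<notin> S1)"
      using tp that unfolding TP_def by blast
    then show ?thesis using that(1) by (auto simp: f_def g_def)
  qed
  have fnn: "f j \<ge> 0" "g j \<ge> 0" for j by (auto simp: f_def g_def)
  have "f j1 \<le> sum f UNIV" "g j1 \<le> sum g UNIV"
    by (rule member_le_sum; simp add: fnn)+
  then have M2: "M \<ge> 2" using fg2[OF jb] by (simp add: M_def)
  show ?thesis
  proof (intro exI conjI ballI impI)
    fix s assume "s \<in> S1" "s \<in> Xset" and ne: "s \<noteq> Apt j0 \<and> s \<noteq> Bpt j0"
    then obtain j where sj: "s = Apt j \<or> s = Bpt j \<or> s = Cpt j" unfolding Xset_def by auto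
    then show "inner (\<alpha>, \<gamma>) s = 0"
    proof (elim disjE)
      assume s: "s = Bpt j"
      then have "j \<noteq> j0" using ne by auto
      moreover have "\<alpha> $ j = f j" using \<open>j \<noteq> j0\<close> by (simp add: \<alpha>_def axis_def)
      ultimately show ?thesis using s \<open>s \<in> S1\<close> fg2[of j]
        by (simp only: ipB tot) (simp add: \<gamma>_def)
    next
      assume s: "s = Cpt j"
      then show ?thesis using \<open>s \<in> S1\<close> by (simp add: ipC \<gamma>_def g_def)
    next
      assume s: "s = Apt j"
      then have "j \<noteq> j0" using ne by auto
      then show ?thesis using s \<open>s \<in> S1\<close> by (simp add: ipA \<alpha>_def f_def axis_def)
    qed
  next
    have "inner (\<alpha>, \<gamma>) (Bpt j0) = ccj j0 * (1 + M)"
      by (simp only: ipB tot) (simp add: \<alpha>_def \<gamma>_def f0 g0)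
    moreover have "inner (\<alpha>, \<gamma>) (Apt j0) = 1 - M"
      by (simp add: ipA \<alpha>_def f0)
    moreover have "ccj j0 * (1 + M) > 0" using cc_pos[of j0] M2 by simp
    ultimately show "inner (\<alpha>, \<gamma>) (Apt j0) * inner (\<alpha>, \<gamma>) (Bpt j0) < 0"
      using M2 by (simp add: mult_neg_pos)
  qed
qed

lemma sgn_flip:
  assumes "inner w0 p * inner w0 q < (0::real)" "\<forall>s\<in>T. inner w0 s = 0"
  shows "\<exists>w. inner w p > 0 \<and> inner w q < 0 \<and> (\<forall>s\<in>T. inner w s = 0)"
proof (cases "inner w0 p > 0")
  case True
  then show ?thesis using assms by (intro exI[of _ w0]) (auto simp: mult_less_0_iff)
next
  case False
  then show ?thesis using assms by (intro exI[of _ "- w0"]) (auto simp: mult_less_0_iff)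
qed

lemma pick:
  fixes S1 :: "'k::finite pt set"
  assumes tp: "TP S1" and pS: "p \<in> S1" and pj: "p = Apt j0 \<or> p = Bpt j0 \<or> p = Cpt j0"
    and hb: "Bpt jb \<in> S1 - {p}" and SX: "S1 \<subseteq> Xset"
  shows "\<exists>q r w. (q = Apt j0 \<or> q = Bpt j0 \<or> q = Cpt j0) \<and> (r = Apt j0 \<or> r = Bpt j0 \<or> r = Cpt j0)
     \<and> p \<noteq> q \<and> p \<noteq> r \<and> q \<noteq> r \<and> r \<in> S1 \<and> q \<notin> S1
     \<and> inner w p > 0 \<and> inner w q < 0 \<and> (\<forall>s \<in> S1 - {p}. inner w s = 0)"
proof -
  have t: "(Apt j0 \<notin> S1 \<and> Bpt j0 \<in> S1 \<and> Cpt j0 \<in> S1) \<or> (Apt j0 \<in> S1 \<and> Bpt j0 \<notin> S1 \<and> Cpt j0 \<in> S1)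
     \<or> (Apt j0 \<in> S1 \<and> Bpt j0 \<in> S1 \<and> Cpt j0 \<notin> S1)" using tp unfolding TP_def by blast
  obtain q r where qr: "q = Apt j0 \<or> q = Bpt j0 \<or> q = Cpt j0" "r = Apt j0 \<or> r = Bpt j0 \<or> r = Cpt j0"
     "p \<noteq> q" "p \<noteq> r" "q \<noteq> r" "r \<in> S1" "q \<notin> S1"
    using t pj pS apply (elim disjE conjE)
    by ((rule that[of "Apt j0" "Bpt j0"]; simp; fail) | (rule that[of "Apt j0" "Cpt j0"]; simp; fail) | (rule that[of "Bpt j0" "Apt j0"]; simp; fail) | (rule that[of "Bpt j0" "Cpt j0"]; simp; fail) | (rule that[of "Cpt j0" "Apt j0"]; simp; fail) | (rule that[of "Cpt j0" "Bpt j0"]; simp; fail))+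
  have j1: "jb \<noteq> j0" if "r \<noteq> Bpt j0"
  proof
    assume "jb = j0"
    then have "Bpt j0 \<in> S1" "Bpt j0 \<noteq> p" using hb by auto
    then show False using qr pj that by auto
  qed
  have zero: "\<forall>s\<in>S1 - {p}. inner w0 s = 0" if "\<forall>s\<in>S1. s \<in> Xset \<longrightarrow> s \<noteq> p \<and> s \<noteq> q \<longrightarrow> inner w0 s = 0" for w0
    using that SX qr(7) by auto
  have "\<exists>w0. inner w0 p * inner w0 q < 0 \<and> (\<forall>s\<in>S1 - {p}. inner w0 s = 0)"
  proof -
    consider "r = Apt j0" | "r = Bpt j0" | "r = Cpt j0" using qr by blast
    then show ?thesis
    proof cases
      case 1
      then have pq: "(p = Bpt j0 \<and> q = Cpt j0) \<or> (p = Cpt j0 \<and> q = Bpt j0)" using qr pj by auto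
      obtain w0 where w0: "\<forall>s\<in>S1. s \<in> Xset \<longrightarrow> s \<noteq> Bpt j0 \<and> s \<noteq> Cpt j0 \<longrightarrow> inner w0 s = 0"
        "inner w0 (Bpt j0) * inner w0 (Cpt j0) < 0"
        using W_A[OF tp, of j0 jb] 1 qr(6) j1 hb by auto
      show ?thesis
        apply (rule exI[of _ w0], rule conjI)
        using pq w0(2) apply (auto simp: mult.commute)[1]
        apply (rule zero) using pq w0(1) by auto
    next
      case 2
      then have pq: "(p = Apt j0 \<and> q = Cpt j0) \<or> (p = Cpt j0 \<and> q = Apt j0)" using qr pj by auto
      obtain w0 where w0: "\<forall>s\<in>S1. s \<in> Xset \<longrightarrow> s \<noteq> Apt j0 \<and> s \<noteq> Cpt j0 \<longrightarrow> inner w0 s = 0"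
        "inner w0 (Apt j0) * inner w0 (Cpt j0) < 0"
        using W_B[of S1 j0] by auto
      show ?thesis
        apply (rule exI[of _ w0], rule conjI)
        using pq w0(2) apply (auto simp: mult.commute)[1]
        apply (rule zero) using pq w0(1) by auto
    next
      case 3
      then have pq: "(p = Apt j0 \<and> q = Bpt j0) \<or> (p = Bpt j0 \<and> q = Apt j0)" using qr pj by auto
      obtain w0 where w0: "\<forall>s\<in>S1. s \<in> Xset \<longrightarrow> s \<noteq> Apt j0 \<and> s \<noteq> Bpt j0 \<longrightarrow> inner w0 s = 0"
        "inner w0 (Apt j0) * inner w0 (Bpt j0) < 0"
        using W_C[OF tp, of j0 jb] 3 qr(6) j1 hb by auto
      show ?thesis
        apply (rule exI[of _ w0], rule conjI)
        using pq w0(2) apply (auto simp: mult.commute)[1]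
        apply (rule zero) using pq w0(1) by auto
    qed
  qed
  then obtain w0 where "inner w0 p * inner w0 q < 0" "\<forall>s\<in>S1 - {p}. inner w0 s = 0" by blast
  from sgn_flip[OF this] obtain w where "inner w p > 0" "inner w q < 0" "\<forall>s\<in>S1 - {p}. inner w s = 0" by blast
  then show ?thesis using qr by blast
qed

lemma tr_cases:
  assumes "card (S \<inter> {a, b, c}) = 2" "a \<noteq> b" "a \<noteq> c" "b \<noteq> c"
  shows "(a \<notin> S \<and> b \<in> S \<and> c \<in> S) \<or> (a \<in> S \<and> b \<notin> S \<and> c \<in> S) \<or> (a \<in> S \<and> b \<in> S \<and> c \<notin> S)"
  using assms by (cases "a \<in> S"; cases "b \<in> S"; cases "c \<in> S") (auto simp: Int_insert_right)

lemma good_TP: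
  fixes S :: "'k::finite pt set"
  assumes g: "good S"
  shows "TP S"
proof -
  define Tr :: "'k \<Rightarrow> 'k pt set" where "Tr j = {Apt j, Bpt j, Cpt j}" for j
  have SX: "S \<subseteq> Xset" and cS: "card S = 2 * CARD('k)" and nt: "\<forall>j. \<not> Tr j \<subseteq> S"
    using g unfolding good_def Tr_def by auto
  have "Xset = (\<Union>j. Tr j)" unfolding Xset_def Tr_def by auto
  then have SU: "S = (\<Union>j. S \<inter> Tr j)" using SX by auto
  have cT: "card (Tr j) = 3" for j by (simp add: Tr_def)
  have le2: "card (S \<inter> Tr j) \<le> 2" for j
  proof -
    have "S \<inter> Tr j \<subset> Tr j" using nt[rule_format, of j] by auto
    moreover have "finite (Tr j)" by (simp add: Tr_def)
    ultimately have "card (S \<inter> Tr j) < card (Tr j)" using psubset_card_mono by blast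
    then show ?thesis using cT[of j] by simp
  qed
  have "card S = (\<Sum>j\<in>UNIV. card (S \<inter> Tr j))"
    apply (subst SU)
    apply (rule card_UN_disjoint)
      apply (simp_all add: Tr_def)
    by auto
  then have sum2: "(\<Sum>j\<in>UNIV. card (S \<inter> Tr j)) = (\<Sum>j\<in>(UNIV::'k set). 2)" using cS by simp
  have eq2: "card (S \<inter> Tr j) = 2" for j
  proof (rule ccontr)
    assume "card (S \<inter> Tr j) \<noteq> 2"
    then have "card (S \<inter> Tr j) < 2" using le2[of j] by simp
    then have "(\<Sum>j\<in>UNIV. card (S \<inter> Tr j)) < (\<Sum>j\<in>(UNIV::'k set). 2)"
      by (intro sum_strict_mono_ex1) (auto simp: le2)
    then show False using sum2 by simp
  qed
  show ?thesis unfolding TP_def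
  proof
    fix j show "(Apt j \<notin> S \<and> Bpt j \<in> S \<and> Cpt j \<in> S) \<or> (Apt j \<in> S \<and> Bpt j \<notin> S \<and> Cpt j \<in> S)
     \<or> (Apt j \<in> S \<and> Bpt j \<in> S \<and> Cpt j \<notin> S)"
      by (rule tr_cases) (use eq2[of j] in \<open>auto simp: Tr_def\<close>)
  qed
qed

lemma hull_halfspace:
  assumes "\<forall>s\<in>S. inner w s \<ge> (0::real)" "x \<in> convex hull S"
  shows "inner w x \<ge> 0"
proof -
  have "convex hull S \<subseteq> {x. inner w x \<ge> 0}"
    by (rule hull_minimal) (use assms(1) convex_halfspace_ge in auto)
  then show ?thesis using assms(2) by auto
qed

lemma hull_hyper:
  assumes "\<forall>s\<in>S. inner w s = (0::real)" "x \<in> convex hull S"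
  shows "inner w x = 0"
proof -
  have "convex hull S \<subseteq> {x. inner w x = 0}"
    by (rule hull_minimal) (use assms(1) convex_hyperplane in auto)
  then show ?thesis using assms(2) by auto
qed

lemma sep_inter:
  assumes T: "T \<noteq> {}" and z: "\<forall>s\<in>T. inner w s = 0" and wp: "inner w p > 0" and wq: "inner w q < 0"
  shows "convex hull (insert p T) \<inter> convex hull (insert q T) \<subseteq> convex hull T"
proof
  fix x assume "x \<in> convex hull (insert p T) \<inter> convex hull (insert q T)"
  then obtain u v b u' v' b' where h: "u \<ge> 0" "v \<ge> 0" "u + v = 1" "b \<in> convex hull T" "x = u *\<^sub>R p + v *\<^sub>R b"
    "u' \<ge> 0" "v' \<ge> 0" "u' + v' = 1" "b' \<in> convex hull T" "x = u' *\<^sub>R q + v' *\<^sub>R b'"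
    unfolding convex_hull_insert[OF T] by blast
  have "inner w b = 0" "inner w b' = 0" using hull_hyper[OF z] h by auto
  have "inner w x = u * inner w p"
    unfolding h(5) using \<open>inner w b = 0\<close> by (simp add: inner_add_right)
  moreover have "inner w x = u' * inner w q"
    unfolding h(10) using \<open>inner w b' = 0\<close> by (simp add: inner_add_right)
  moreover have "u * inner w p \<ge> 0" using h wp by simp
  moreover have "u' * inner w q \<le> 0" using h wq by (simp add: mult_nonneg_nonpos)
  ultimately have "u * inner w p = 0" by linarith
  then have "u = 0" using wp by simp
  then show "x \<in> convex hull T" using h by simp
qed

theorem mainTheorem7:
  fixes S1 F :: "('k::finite) pt set"
  assumes "CARD('k) \<ge> 2"
    and "good S1"
    and "F face_of convex hull S1"
    and "aff_dim F = 2 * int CARD('k) - 2"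
    and "\<not> F face_of Delta0"
  shows "\<exists>S2. (good S2 \<and> convex hull S2 \<noteq> convex hull S1 \<and> F face_of convex hull S2)
           \<and> (\<forall>S. good S \<and> convex hull S \<noteq> convex hull S1 \<and> F face_of convex hull S
                  \<longrightarrow> convex hull S = convex hull S2)
           \<and> convex hull S1 \<inter> convex hull S2 = convex hull (S1 \<inter> S2)"
proof -
  have SX: "S1 \<subseteq> Xset" and cS1: "card S1 = 2 * CARD('k)"
    and ntr: "\<forall>j. \<not> {Apt j, Bpt j, Cpt j} \<subseteq> S1"
    using assms(2) unfolding good_def by auto
  have ind1: "\<not> affine_dependent S1" by (rule indep_X[OF SX ntr])
  have tp: "TP S1" by (rule good_TP[OF assms(2)])
  have fin1: "finite S1" using SX finite_Xset finite_subset by blast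
  obtain T where TS: "T \<subseteq> S1" and FT: "F = convex hull T"
    using assms(3) face_of_convex_hull_affine_independent[OF ind1] by blast
  have indT: "\<not> affine_dependent T" using ind1 TS affine_dependent_subset by blast
  have "aff_dim F = aff_dim T" by (simp add: FT aff_dim_convex_hull)
  then have "int (card T) = 2 * int CARD('k) - 1"
    using aff_dim_affine_independent[OF indT] assms(4) by simp
  then have cT: "card T + 1 = card S1" using cS1 by linarith
  have "card (S1 - T) = 1" using card_Diff_subset[OF finite_subset[OF TS fin1] TS] cT by simp
  then obtain p where p: "S1 - T = {p}" by (rule card_1_singletonE)
  then have pS: "p \<in> S1" and pT: "p \<notin> T" and Tdef: "T = S1 - {p}" using TS by auto
  have hasB: "\<exists>jb. Bpt jb \<in> T"
  proof (rule ccontr)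
    assume nB: "\<not> (\<exists>jb. Bpt jb \<in> T)"
    let ?AC = "range Apt \<union> range Cpt :: 'k pt set"
    have "T \<subseteq> ?AC" using nB TS SX unfolding Xset_def by auto
    moreover have "\<not> affine_dependent ?AC"
      by (rule indep_X) (auto simp: Xset_def)
    ultimately have "F face_of convex hull ?AC"
      using face_of_convex_hull_affine_independent FT by blast
    then show False using assms(5) by (simp add: Delta0_def)
  qed
  then obtain jb where jb: "Bpt jb \<in> S1 - {p}" using Tdef by blast
  obtain j0 where pj: "p = Apt j0 \<or> p = Bpt j0 \<or> p = Cpt j0"
    using pS SX unfolding Xset_def by auto
  obtain q r w where qr: "q = Apt j0 \<or> q = Bpt j0 \<or> q = Cpt j0" "r = Apt j0 \<or> r = Bpt j0 \<or> r = Cpt j0"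
     "p \<noteq> q" "p \<noteq> r" "q \<noteq> r" "r \<in> S1" "q \<notin> S1"
     and wp: "inner w p > 0" and wq: "inner w q < 0" and wz: "\<forall>s \<in> S1 - {p}. inner w s = 0"
    using pick[OF tp pS pj jb SX] by blast
  define S2 where "S2 = insert q T"
  have S1p: "S1 = insert p T" using Tdef pS by auto
  have qX: "q \<in> Xset" using qr(1) unfolding Xset_def by auto
  have qT: "q \<notin> T" using qr(7) TS by auto
  have S2X: "S2 \<subseteq> Xset" using qX TS SX by (auto simp: S2_def)
  have ntr2: "\<forall>j. \<not> {Apt j, Bpt j, Cpt j} \<subseteq> S2"
  proof (intro allI notI)
    fix j assume sub: "{Apt j, Bpt j, Cpt j} \<subseteq> S2"
    show False
    proof (cases "j = j0")
      case True
      then have "p \<in> S2" using sub pj by auto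
      then show False using pT qr(3) by (auto simp: S2_def)
    next
      case False
      then have "{Apt j, Bpt j, Cpt j} \<subseteq> T" using sub qr(1) by (auto simp: S2_def)
      then show False using ntr TS by blast
    qed
  qed
  have fin2: "finite T" using TS fin1 finite_subset by blast
  have good2: "good S2"
    unfolding good_def
  proof (intro conjI)
    show "S2 \<subseteq> Xset" by (rule S2X)
    show "card S2 = 2 * CARD('k)" using cT cS1 qT fin2 by (simp add: S2_def)
    show "\<forall>j. \<not> {Apt j, Bpt j, Cpt j} \<subseteq> S2" by (rule ntr2)
    show "S2 \<noteq> range Apt \<union> range Cpt"
    proof
      assume "S2 = range Apt \<union> range Cpt"
      moreover have "Bpt jb \<in> S2" using jb Tdef by (auto simp: S2_def)
      ultimately show False by auto
    qed
  qed
  have ind2: "\<not> affine_dependent S2" by (rule indep_X[OF S2X ntr2])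
  have hne: "convex hull S2 \<noteq> convex hull S1"
  proof
    assume eq: "convex hull S2 = convex hull S1"
    have "q \<in> convex hull S1" unfolding eq[symmetric] by (rule hull_inc) (simp add: S2_def)
    moreover have "\<forall>s\<in>S1. inner w s \<ge> 0"
    proof
      fix s assume "s \<in> S1"
      then show "inner w s \<ge> 0" using wz wp by (cases "s = p") auto
    qed
    ultimately have "inner w q \<ge> 0" using hull_halfspace by blast
    then show False using wq by simp
  qed
  have face2: "F face_of convex hull S2"
    using face_of_convex_hull_affine_independent[OF ind2] FT by (auto simp: S2_def)
  have uniq: "convex hull S = convex hull S2"
    if gS: "good S" and neS: "convex hull S \<noteq> convex hull S1" and fS: "F face_of convex hull S" for S
  proof -
    have SX': "S \<subseteq> Xset" and cS: "card S = 2 * CARD('k)"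
      and ntrS: "\<forall>j. \<not> {Apt j, Bpt j, Cpt j} \<subseteq> S"
      using gS unfolding good_def by auto
    have indS: "\<not> affine_dependent S" by (rule indep_X[OF SX' ntrS])
    have finS: "finite S" using SX' finite_Xset finite_subset by blast
    obtain T' where T'S: "T' \<subseteq> S" and FT': "F = convex hull T'"
      using fS face_of_convex_hull_affine_independent[OF indS] by blast
    have indT': "\<not> affine_dependent T'" using indS T'S affine_dependent_subset by blast
    have "x \<in> T \<longleftrightarrow> x \<in> T'" for x
      using extreme_point_of_convex_hull_affine_independent[OF indT, of x]
        extreme_point_of_convex_hull_affine_independent[OF indT', of x] FT FT' by simp
    then have TT': "T' = T" by blast
    have "card (S - T) = 1" using card_Diff_subset[OF fin2] T'S TT' cS cT cS1 by simp
    then obtain x where x: "S - T = {x}" by (rule card_1_singletonE)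
    then have Sx: "S = insert x T" and xT: "x \<notin> T" and xS: "x \<in> S" using T'S TT' by auto
    obtain j where xj: "x = Apt j \<or> x = Bpt j \<or> x = Cpt j" using xS SX' unfolding Xset_def by auto
    show ?thesis
    proof (cases "j = j0")
      case False
      have "x \<notin> S1"
      proof
        assume "x \<in> S1"
        then have "x = p" using xT Tdef by auto
        then show False using xj pj False by auto
      qed
      moreover have "(Apt j \<notin> S1 \<and> Bpt j \<in> S1 \<and> Cpt j \<in> S1) \<or> (Apt j \<in> S1 \<and> Bpt j \<notin> S1 \<and> Cpt j \<in> S1)
          \<or> (Apt j \<in> S1 \<and> Bpt j \<in> S1 \<and> Cpt j \<notin> S1)" using tp unfolding TP_def by blast
      ultimately have "{Apt j, Bpt j, Cpt j} - {x} \<subseteq> S1" using xj by auto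
      moreover have "p \<notin> {Apt j, Bpt j, Cpt j}" using pj False by auto
      ultimately have "{Apt j, Bpt j, Cpt j} - {x} \<subseteq> T" using Tdef by auto
      then have "{Apt j, Bpt j, Cpt j} \<subseteq> S" using Sx xj by auto
      then show ?thesis using ntrS by blast
    next
      case True
      have "x = p \<or> x = q \<or> x = r" using xj True pj qr(1-5) by auto
      moreover have "x \<noteq> r" using xT qr(4,6) Tdef by auto
      moreover have "x \<noteq> p" using neS Sx S1p by auto
      ultimately have "x = q" by blast
      then show ?thesis using Sx by (simp add: S2_def)
    qed
  qed
  have inter: "S1 \<inter> S2 = T" using S1p qr(3,7) pT by (auto simp: S2_def)
  have Tne: "T \<noteq> {}" using jb Tdef by auto
  have sub: "convex hull S1 \<inter> convex hull S2 \<subseteq> convex hull T"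
      unfolding S1p S2_def by (rule sep_inter[OF Tne _ wp wq]) (use wz Tdef in auto)
  have "convex hull S1 \<inter> convex hull S2 = convex hull (S1 \<inter> S2)"
  proof
    show "convex hull S1 \<inter> convex hull S2 \<subseteq> convex hull (S1 \<inter> S2)" using sub inter by simp
    show "convex hull (S1 \<inter> S2) \<subseteq> convex hull S1 \<inter> convex hull S2"
      by (simp add: hull_mono)
  qed
  then show ?thesis using good2 hne face2 uniq by blast
qed

end
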